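(* Let $S>0$, let $D$ be a finite multiset of items with sizes in $(0,S]$, let $k\ge1$ be an integer and $\epsilon\in(0,1/2]$. Consider the following algorithm. (1) Let $I$ be the items of $D$ of size at most $\epsilon S$ and $J$ the items of size larger than $\epsilon S$. (2) Sort $J$ in non-decreasing order of size and partition it into consecutive groups of $g=\max\{1,\lfloor n(J)\epsilon^2\rfloor\}$ items (the last group possibly smaller), where $n(J)$ is the number of items of $J$; let $U$ be the instance obtained by rounding the size of every item up to the maximum size in its group. (3) Compute an optimal $k$-times bin packing of $U$ (i.e. of $U_k$), e.g. by optimally solving its configuration integer program. (4) Replace every copy of a rounded item by the corresponding copy of its original item, obtaining a $k$-times bin packing of $J$. (5) Insert the $k$ copies of each item of $I$ one at a time, each into some existing bin in which it fits (total size at most $S$) and which contains no copy of the same item, opening a new bin only if no such bin exists. Then the number $bins(D_k)$ of bins produced satisfies $$bins(D_k)\le(1+2\epsilon)\,OPT(D_k)+k.$$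
   Context: For a multiset $D$ of items with sizes in $(0,S]$ and an integer $k\ge1$, $D_k$ denotes the collection of $k$ copies of each item of $D$. A $k$-times bin packing of $D$ is an assignment of all copies in $D_k$ to bins such that each bin has total size at most $S$ and no bin contains two copies of the same item; $OPT(D_k)$ is the minimum number of bins in such a packing. *)

theory Defs
  imports Complex_Main
begin

text \<open>Items of the instance D are indexed by a finite set of naturals (a multiset is
  an indexed family of sizes w). A copy of item i is a pair (i, j) with j < k.
  An assignment f maps copies to bin labels (naturals).\<close>

definition copies :: "nat set \<Rightarrow> nat \<Rightarrow> (nat \<times> nat) set" where
  "copies X k = X \<times> {..<k}"

definition load :: "(nat \<Rightarrow> real) \<Rightarrow> (nat \<times> nat \<Rightarrow> nat) \<Rightarrow> (nat \<times> nat) set \<Rightarrow> nat \<Rightarrow> real" where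
  "load w f A b = (\<Sum>c\<in>{c\<in>A. f c = b}. w (fst c))"

definition valid_packing :: "real \<Rightarrow> (nat \<Rightarrow> real) \<Rightarrow> (nat \<times> nat) set \<Rightarrow> (nat \<times> nat \<Rightarrow> nat) \<Rightarrow> bool" where
  "valid_packing S w A f \<longleftrightarrow>
     (\<forall>b. load w f A b \<le> S) \<and>
     (\<forall>c\<in>A. \<forall>c'\<in>A. f c = f c' \<and> fst c = fst c' \<longrightarrow> c = c')"

definition num_bins :: "(nat \<times> nat \<Rightarrow> nat) \<Rightarrow> (nat \<times> nat) set \<Rightarrow> nat" where
  "num_bins f A = card (f ` A)"

definition OPT :: "real \<Rightarrow> (nat \<Rightarrow> real) \<Rightarrow> nat set \<Rightarrow> nat \<Rightarrow> nat" where
  "OPT S w X k = (LEAST m. \<exists>f. valid_packing S w (copies X k) f \<and> num_bins f (copies X k) = m)"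

text \<open>Linear grouping: sigma enumerates the m large items in non-decreasing order of
  size (positions 0..m-1); positions are grouped into consecutive blocks of g; the
  rounded size of an item is the maximum size in its group.\<close>
definition rounded_size :: "(nat \<Rightarrow> real) \<Rightarrow> (nat \<Rightarrow> nat) \<Rightarrow> nat \<Rightarrow> nat \<Rightarrow> nat \<Rightarrow> real" where
  "rounded_size d \<sigma> m g i =
     Max ((\<lambda>q. d (\<sigma> q)) ` {q. q < m \<and> q div g = the_inv_into {..<m} \<sigma> i div g})"

definition copy_order :: "nat list \<Rightarrow> nat \<Rightarrow> (nat \<times> nat) list" where
  "copy_order xs k = concat (map (\<lambda>i. map (\<lambda>j. (i, j)) [0..<k]) xs)"

end

theory Submission
  imports Defs "HOL-Library.Nat_Bijection"
begin

lemma sum_loads: "finite A \<Longrightarrow> (\<Sum>b\<in>f`A. load w f A b) = (\<Sum>c\<in>A. w (fst c))"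
  unfolding load_def by (rule sum.image_gen[symmetric])

lemma finite_copies: "finite X \<Longrightarrow> finite (copies X k)"
  unfolding copies_def by simp

lemma sum_copies: "finite X \<Longrightarrow> (\<Sum>c\<in>copies X k. w (fst c)) = real k * (\<Sum>i\<in>X. w i)"
proof -
  have "(\<Sum>c\<in>X\<times>{..<k}. w (fst c)) = (\<Sum>(x,y)\<in>X\<times>{..<k}. w x)"
    by (simp add: case_prod_beta')
  also have "\<dots> = (\<Sum>x\<in>X. \<Sum>y<k. w x)" by (rule sum.cartesian_product[symmetric])
  finally show ?thesis unfolding copies_def by (simp add: sum_distrib_left)
qed

lemma valid_lower:
  assumes "finite X" "valid_packing S w (copies X k) f"
  shows "real k * (\<Sum>i\<in>X. w i) \<le> S * real (num_bins f (copies X k))"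
proof -
  have "real k * (\<Sum>i\<in>X. w i) = (\<Sum>b\<in>f`copies X k. load w f (copies X k) b)"
    using sum_loads[OF finite_copies[OF assms(1)]] sum_copies[OF assms(1)] by simp
  also have "\<dots> \<le> of_nat (card (f`copies X k)) * S"
    by (rule sum_bounded_above) (use assms(2) in \<open>auto simp: valid_packing_def\<close>)
  finally show ?thesis by (simp add: num_bins_def mult.commute)
qed

lemma exists_valid:
  assumes "S \<ge> 0" "\<forall>i\<in>X. w i \<le> S"
  shows "\<exists>f. valid_packing S w (copies X k) f"
proof -
  have "valid_packing S w (copies X k) prod_encode"
    unfolding valid_packing_def
  proof (intro conjI allI ballI impI)
    fix b
    have e: "{c \<in> copies X k. prod_encode c = b} = {c. c \<in> copies X k \<and> c = prod_decode b}"
      by auto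
    show "load w prod_encode (copies X k) b \<le> S"
    proof (cases "prod_decode b \<in> copies X k")
      case True
      then have "{c. c \<in> copies X k \<and> c = prod_decode b} = {prod_decode b}" by auto
      then show ?thesis unfolding load_def e using assms True by (auto simp: copies_def)
    next
      case False
      then have "{c. c \<in> copies X k \<and> c = prod_decode b} = {}" by auto
      then show ?thesis unfolding load_def e using assms by (simp only: sum.empty)
    qed
  next
    fix c c' assume "prod_encode c = prod_encode c' \<and> fst c = fst c'"
    then show "c = c'" by (metis prod_encode_inverse)
  qed
  then show ?thesis by blast
qed

lemma OPT_attained:
  assumes "\<exists>f. valid_packing S w (copies X k) f"
  obtains f where "valid_packing S w (copies X k) f" "num_bins f (copies X k) = OPT S w X k"
proof -
  from assms have "\<exists>m f. valid_packing S w (copies X k) f \<and> num_bins f (copies X k) = m" by blast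
  from LeastI_ex[OF this] show ?thesis using that unfolding OPT_def by blast
qed

lemma OPT_le: "valid_packing S w (copies X k) f \<Longrightarrow> OPT S w X k \<le> num_bins f (copies X k)"
  unfolding OPT_def by (rule Least_le) blast

lemma copy_order_set: "set (copy_order xs k) = set xs \<times> {..<k}"
  unfolding copy_order_def by auto

lemma copy_order_distinct: "distinct xs \<Longrightarrow> distinct (copy_order xs k)"
  unfolding copy_order_def by (induction xs) (auto simp: distinct_map inj_on_def)

lemma div_eq_less: "0 < (g::nat) \<Longrightarrow> q' div g = q div g \<Longrightarrow> q' < q + g"
proof -
  assume g: "0 < g" and e: "q' div g = q div g"
  have "q' = q' div g * g + q' mod g" by simp
  also have "\<dots> < q div g * g + g" using e g by simp
  also have "\<dots> \<le> q + g" by (simp add: div_times_less_eq_dividend)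
  finally show ?thesis .
qed

lemma rounded_le_next:
  assumes bij: "bij_betw \<sigma> {..<m} J"
    and mono: "\<forall>p q. p \<le> q \<and> q < m \<longrightarrow> d (\<sigma> p) \<le> d (\<sigma> q)"
    and g: "g \<ge> 1" and qg: "q + g < m"
  shows "rounded_size d \<sigma> m g (\<sigma> q) \<le> d (\<sigma> (q + g))"
proof -
  have inj: "inj_on \<sigma> {..<m}" using bij by (simp add: bij_betw_def)
  have t: "the_inv_into {..<m} \<sigma> (\<sigma> q) = q" using the_inv_into_f_f[OF inj] qg by simp
  show ?thesis unfolding rounded_size_def t
  proof (rule Max.boundedI)
    show "finite ((\<lambda>q. d (\<sigma> q)) ` {qa. qa < m \<and> qa div g = q div g})" by simp
    show "(\<lambda>q. d (\<sigma> q)) ` {qa. qa < m \<and> qa div g = q div g} \<noteq> {}" using qg by (auto intro!: exI[of _ q])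
  next
    fix a assume "a \<in> (\<lambda>q. d (\<sigma> q)) ` {qa. qa < m \<and> qa div g = q div g}"
    then obtain q' where "a = d (\<sigma> q')" "q' div g = q div g" by auto
    with div_eq_less[of g q' q] g have "q' < q + g" by simp
    then show "a \<le> d (\<sigma> (q + g))" using mono qg \<open>a = _\<close> by simp
  qed
qed

lemma rounded_le_S:
  assumes bij: "bij_betw \<sigma> {..<m} J" and dS: "\<forall>i\<in>J. d i \<le> S" and i: "i \<in> J"
  shows "rounded_size d \<sigma> m g i \<le> S"
proof -
  have tm: "the_inv_into {..<m} \<sigma> i < m"
    using bij i by (metis bij_betw_def bij_betw_the_inv_into lessThan_iff bij_betw_apply)
  show ?thesis unfolding rounded_size_def
  proof (rule Max.boundedI)
    show "finite ((\<lambda>q. d (\<sigma> q)) ` {q. q < m \<and> q div g = the_inv_into {..<m} \<sigma> i div g})" by simp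
    show "(\<lambda>q. d (\<sigma> q)) ` {q. q < m \<and> q div g = the_inv_into {..<m} \<sigma> i div g} \<noteq> {}" using tm by auto
  next
    fix a assume "a \<in> (\<lambda>q. d (\<sigma> q)) ` {q. q < m \<and> q div g = the_inv_into {..<m} \<sigma> i div g}"
    then obtain q' where "a = d (\<sigma> q')" "q' < m" by auto
    then show "a \<le> S" using dS bij_betw_apply[OF bij] by auto
  qed
qed

lemma grouping:
  assumes bij: "bij_betw \<sigma> {..<m} J"
    and mono: "\<forall>p q. p \<le> q \<and> q < m \<longrightarrow> d (\<sigma> p) \<le> d (\<sigma> q)"
    and g: "g \<ge> 1" and dJ: "\<forall>i\<in>J. 0 \<le> d i \<and> d i \<le> S" and S: "S \<ge> 0"
    and hv: "valid_packing S d (copies J k) h"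
  shows "\<exists>f'. valid_packing S (rounded_size d \<sigma> m g) (copies J k) f' \<and>
              num_bins f' (copies J k) \<le> num_bins h (copies J k) + g * k"
proof -
  define u where "u = rounded_size d \<sigma> m g"
  define \<tau> where "\<tau> = the_inv_into {..<m} \<sigma>"
  define A where "A = copies J k"
  define N where "N = Suc (Max (h ` A))"
  define f' where "f' = (\<lambda>(i,j). if \<tau> i + g < m then h (\<sigma> (\<tau> i + g), j) else N + prod_encode (\<tau> i, j))"
  have inj: "inj_on \<sigma> {..<m}" using bij by (simp add: bij_betw_def)
  have finJ: "finite J" using bij bij_betw_finite by blast
  have finA: "finite A" unfolding A_def using finJ by (rule finite_copies)
  have \<tau>m: "\<tau> i < m" if "i \<in> J" for i
    using bij that unfolding \<tau>_def by (metis bij_betw_the_inv_into lessThan_iff bij_betw_apply)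
  have \<sigma>\<tau>: "\<sigma> (\<tau> i) = i" if "i \<in> J" for i
    using bij that unfolding \<tau>_def by (meson f_the_inv_into_f_bij_betw)
  have \<sigma>J: "\<sigma> q \<in> J" if "q < m" for q using bij_betw_apply[OF bij] that by simp
  have hN: "h c < N" if "c \<in> A" for c unfolding N_def using finA that by (simp add: le_imp_less_Suc)
  have f'1: "f' (i,j) = h (\<sigma> (\<tau> i + g), j)" if "\<tau> i + g < m" for i j using that by (simp add: f'_def)
  have f'2: "f' (i,j) = N + prod_encode (\<tau> i, j)" if "\<not> \<tau> i + g < m" for i j using that by (simp add: f'_def)
  have inA: "(\<sigma> (\<tau> i + g), j) \<in> A" if "\<tau> i + g < m" "j < k" for i j
    using that \<sigma>J by (simp add: A_def copies_def)
  define F where "F = (\<lambda>(q,j). N + prod_encode (q,j)) ` ({m-g..<m} \<times> {..<k})"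
  have img: "f' ` A \<subseteq> h ` A \<union> F"
  proof
    fix b assume "b \<in> f' ` A"
    then obtain i j where ij: "i \<in> J" "j < k" "b = f' (i,j)" by (auto simp: A_def copies_def)
    show "b \<in> h ` A \<union> F"
    proof (cases "\<tau> i + g < m")
      case True then show ?thesis using ij f'1 inA by auto
    next
      case False
      then have "(\<tau> i, j) \<in> {m-g..<m} \<times> {..<k}" using \<tau>m[OF ij(1)] ij(2) by auto
      then show ?thesis using ij f'2[OF False] unfolding F_def by force
    qed
  qed
  have "card (f' ` A) \<le> card (h ` A \<union> F)"
    by (rule card_mono) (use finA img in \<open>auto simp: F_def\<close>)
  also have "\<dots> \<le> card (h ` A) + card F" by (rule card_Un_le)
  also have "card F \<le> card ({m-g..<m} \<times> {..<k})" unfolding F_def by (rule card_image_le) simp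
  also have "\<dots> \<le> g * k" by (simp add: card_cartesian_product; linarith)
  finally have cnt: "card (f' ` A) \<le> card (h ` A) + g * k" by simp
  have hl: "\<forall>b. load d h A b \<le> S" and hd: "\<forall>c\<in>A. \<forall>c'\<in>A. h c = h c' \<and> fst c = fst c' \<longrightarrow> c = c'"
    using hv unfolding valid_packing_def A_def by auto
  have load_ok: "load u f' A b \<le> S" for b
  proof (cases "b < N")
    case True
    define Ab where "Ab = {c\<in>A. f' c = b}"
    define \<phi> where "\<phi> = (\<lambda>c::nat\<times>nat. (\<sigma> (\<tau> (fst c) + g), snd c))"
    have small: "\<tau> (fst c) + g < m" if "c \<in> Ab" for c
    proof (rule ccontr)
      assume "\<not> ?thesis"
      then have "f' c = N + prod_encode (\<tau> (fst c), snd c)" using f'2[of "fst c" "snd c"] by simp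
      then show False using that True unfolding Ab_def by simp
    qed
    have injphi: "inj_on \<phi> Ab"
    proof (rule inj_onI)
      fix c c' assume c: "c \<in> Ab" "c' \<in> Ab" "\<phi> c = \<phi> c'"
      then have "\<sigma> (\<tau> (fst c) + g) = \<sigma> (\<tau> (fst c') + g)" unfolding \<phi>_def by simp
      then have "\<tau> (fst c) + g = \<tau> (fst c') + g"
        using small[OF c(1)] small[OF c(2)] inj by (auto dest: inj_onD)
      then have "\<sigma> (\<tau> (fst c)) = \<sigma> (\<tau> (fst c'))" by simp
      moreover have "fst c \<in> J" "fst c' \<in> J" using c by (auto simp: Ab_def A_def copies_def)
      ultimately have "fst c = fst c'" using \<sigma>\<tau> by simp
      moreover have "snd c = snd c'" using c by (simp add: \<phi>_def)
      ultimately show "c = c'" by (simp add: prod_eq_iff)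
    qed
    have sub: "\<phi> ` Ab \<subseteq> {c\<in>A. h c = b}"
    proof
      fix x assume "x \<in> \<phi> ` Ab"
      then obtain c where c: "c \<in> Ab" "x = \<phi> c" by auto
      obtain i j where ij: "c = (i,j)" by force
      have "i \<in> J" "j < k" "f' (i,j) = b" using c ij by (auto simp: Ab_def A_def copies_def)
      then show "x \<in> {c\<in>A. h c = b}" using c ij small[OF c(1)] f'1 inA unfolding \<phi>_def by auto
    qed
    have "load u f' A b = (\<Sum>c\<in>Ab. u (fst c))" by (simp add: load_def Ab_def)
    also have "\<dots> \<le> (\<Sum>c\<in>Ab. d (fst (\<phi> c)))"
    proof (rule sum_mono)
      fix c assume c: "c \<in> Ab"
      then have "fst c \<in> J" by (auto simp: Ab_def A_def copies_def)
      then have "u (fst c) = u (\<sigma> (\<tau> (fst c)))" using \<sigma>\<tau> by simp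
      also have "\<dots> \<le> d (\<sigma> (\<tau> (fst c) + g))"
        unfolding u_def by (rule rounded_le_next[OF bij mono g small[OF c]])
      finally show "u (fst c) \<le> d (fst (\<phi> c))" by (simp add: \<phi>_def)
    qed
    also have "\<dots> = (\<Sum>x\<in>\<phi> ` Ab. d (fst x))" by (rule sum.reindex[OF injphi, symmetric, unfolded comp_def])
    also have "\<dots> \<le> (\<Sum>x\<in>{c\<in>A. h c = b}. d (fst x))"
      by (rule sum_mono2) (use finA sub dJ in \<open>auto simp: A_def copies_def\<close>)
    also have "\<dots> = load d h A b" by (simp add: load_def)
    also have "\<dots> \<le> S" using hl by simp
    finally show ?thesis .
  next
    case False
    define Ab where "Ab = {c\<in>A. f' c = b}"
    have big: "\<not> \<tau> (fst c) + g < m" if "c \<in> Ab" for c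
    proof
      assume sm: "\<tau> (fst c) + g < m"
      have "fst c \<in> J" "snd c < k" using that by (auto simp: Ab_def A_def copies_def)
      then have "h (\<sigma> (\<tau> (fst c) + g), snd c) < N" using hN inA sm by blast
      then show False using that False f'1[OF sm, of "snd c"] by (simp add: Ab_def)
    qed
    have uniq: "c = c'" if "c \<in> Ab" "c' \<in> Ab" for c c'
    proof -
      have "N + prod_encode (\<tau> (fst c), snd c) = N + prod_encode (\<tau> (fst c'), snd c')"
        using that f'2[OF big[OF that(1)], of "snd c"] f'2[OF big[OF that(2)], of "snd c'"]
        by (simp add: Ab_def)
      then have e: "\<tau> (fst c) = \<tau> (fst c') \<and> snd c = snd c'"
        by (metis prod_encode_inverse prod.inject add_left_cancel)
      have "fst c \<in> J" "fst c' \<in> J" using that by (auto simp: Ab_def A_def copies_def)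
      then have "fst c = fst c'" using e \<sigma>\<tau> by metis
      then show ?thesis using e by (simp add: prod_eq_iff)
    qed
    show ?thesis
    proof (cases "Ab = {}")
      case True
      have "load u f' A b = (\<Sum>c\<in>Ab. u (fst c))" by (simp add: load_def Ab_def)
      then show ?thesis using S True by simp
    next
      case False
      then obtain c where c: "c \<in> Ab" by auto
      then have "Ab = {c}" using uniq by blast
      moreover have "fst c \<in> J" using c by (auto simp: Ab_def A_def copies_def)
      moreover have "u (fst c) \<le> S" unfolding u_def
        by (rule rounded_le_S[OF bij]) (use dJ \<open>fst c \<in> J\<close> in auto)
      ultimately show ?thesis by (simp add: load_def Ab_def[symmetric])
    qed
  qed
  have dist_ok: "c = c'" if a: "c \<in> A" "c' \<in> A" "f' c = f' c'" "fst c = fst c'" for c c'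
  proof -
    obtain i j j' where ij: "c = (i,j)" "c' = (i,j')" using a(4) by (metis prod.collapse)
    have jk: "j < k" "j' < k" using a ij by (auto simp: A_def copies_def)
    show ?thesis
    proof (cases "\<tau> i + g < m")
      case True
      then have "h (\<sigma> (\<tau> i + g), j) = h (\<sigma> (\<tau> i + g), j')" using a ij f'1 by metis
      then show ?thesis using hd inA[OF True jk(1)] inA[OF True jk(2)] ij by fastforce
    next
      case False
      then have "prod_encode (\<tau> i, j) = prod_encode (\<tau> i, j')" using a ij f'2[OF False] by simp
      then show ?thesis using ij by (metis prod_encode_inverse prod.inject)
    qed
  qed
  have "valid_packing S u A f'" unfolding valid_packing_def using load_ok dist_ok by blast
  moreover have "num_bins f' A \<le> num_bins h A + g * k" using cnt by (simp add: num_bins_def)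
  ultimately show ?thesis unfolding u_def A_def by blast
qed

theorem theorem4:
  fixes S \<epsilon> :: real and n k :: nat and d :: "nat \<Rightarrow> real"
    and \<sigma> :: "nat \<Rightarrow> nat" and fJ f :: "nat \<times> nat \<Rightarrow> nat" and xs :: "nat list"
  assumes S_pos: "S > 0"
    and sizes: "\<forall>i<n. 0 < d i \<and> d i \<le> S"
    and k: "k \<ge> 1"
    and eps: "0 < \<epsilon>" "\<epsilon> \<le> 1/2"
    and I_def: "I = {i. i < n \<and> d i \<le> \<epsilon> * S}"
    and J_def: "J = {i. i < n \<and> d i > \<epsilon> * S}"
    and m_def: "m = card J"
    and sorted: "bij_betw \<sigma> {..<m} J"
    and mono: "\<forall>p q. p \<le> q \<and> q < m \<longrightarrow> d (\<sigma> p) \<le> d (\<sigma> q)"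
    and g_def: "g = max 1 (nat \<lfloor>real m * \<epsilon>^2\<rfloor>)"
    and u_def: "u = rounded_size d \<sigma> m g"
    and fJ_valid: "valid_packing S u (copies J k) fJ"
    and fJ_opt: "num_bins fJ (copies J k) = OPT S u J k"
    and f_J: "\<forall>c\<in>copies J k. f c = fJ c"
    and xs: "distinct xs" "set xs = I"
    and cs_def: "cs = copy_order xs k"
    and insert_step: "\<forall>t < length cs.
       (let A = copies J k \<union> set (take t cs); c = cs ! t; i = fst c;
            fits = (\<lambda>b. b \<in> f ` A \<and> load d f A b + d i \<le> S \<and>
                         (\<forall>c'\<in>A. f c' = b \<longrightarrow> fst c' \<noteq> i))
        in (if (\<exists>b. fits b) then fits (f c) else f c \<notin> f ` A))"
  shows "real (num_bins f (copies {..<n} k))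
           \<le> (1 + 2 * \<epsilon>) * real (OPT S d {..<n} k) + real k"
proof -
  define D where "D = copies {..<n} k"
  define Opt where "Opt = real (OPT S d {..<n} k)"
  have Jn: "J \<subseteq> {..<n}" using J_def by auto
  have IJ: "I \<union> J = {..<n}" using I_def J_def by auto
  have IJd: "I \<inter> J = {}" using I_def J_def by auto
  have finJ: "finite J" using Jn finite_subset by blast
  have finD: "finite D" unfolding D_def by (simp add: finite_copies)
  have dpos: "\<forall>i\<in>{..<n}. 0 \<le> d i \<and> d i \<le> S" using sizes by auto
  obtain h where hv: "valid_packing S d D h" and hopt: "num_bins h D = OPT S d {..<n} k"
  proof -
    have "\<exists>f. valid_packing S d (copies {..<n} k) f"
      by (rule exists_valid) (use S_pos dpos in auto)
    then show ?thesis using OPT_attained that unfolding D_def by blast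
  qed
  have Opt0: "Opt \<ge> 0" unfolding Opt_def by simp
  have lowD: "real k * (\<Sum>i<n. d i) \<le> S * Opt"
    using valid_lower[of "{..<n}" S d k h] hv hopt unfolding D_def Opt_def by simp
  have partA: "real (OPT S u J k) \<le> (1 + 2 * \<epsilon>) * Opt + real k"
  proof -
    have JD: "copies J k \<subseteq> D" using Jn unfolding D_def copies_def by auto
    have hJ: "valid_packing S d (copies J k) h"
      unfolding valid_packing_def
    proof (intro conjI allI ballI impI)
      fix b
      have "load d h (copies J k) b \<le> load d h D b"
        unfolding load_def
        by (rule sum_mono2) (use finD JD dpos in \<open>auto simp: D_def copies_def\<close>)
      also have "\<dots> \<le> S" using hv by (simp add: valid_packing_def)
      finally show "load d h (copies J k) b \<le> S" .
    next
      fix c c' assume "c \<in> copies J k" "c' \<in> copies J k" "h c = h c' \<and> fst c = fst c'"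
      then show "c = c'" using hv JD unfolding valid_packing_def by blast
    qed
    have g1: "g \<ge> 1" using g_def by simp
    obtain f' where f'v: "valid_packing S (rounded_size d \<sigma> m g) (copies J k) f'"
      and f'n: "num_bins f' (copies J k) \<le> num_bins h (copies J k) + g * k"
      using grouping[OF sorted mono g1 _ _ hJ] dpos Jn S_pos by fastforce
    have "OPT S u J k \<le> num_bins f' (copies J k)" using OPT_le f'v u_def by blast
    also have "\<dots> \<le> num_bins h (copies J k) + g * k" by (rule f'n)
    also have "num_bins h (copies J k) \<le> num_bins h D"
      unfolding num_bins_def by (rule card_mono) (use finD JD in auto)
    finally have c1: "real (OPT S u J k) \<le> Opt + real g * real k"
      unfolding Opt_def hopt[symmetric] by (simp flip: of_nat_mult of_nat_add)
    have gle: "real g \<le> 1 + real m * \<epsilon>^2"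
    proof -
      have "real (nat \<lfloor>real m * \<epsilon>^2\<rfloor>) \<le> real m * \<epsilon>^2"
        using eps by (simp add: of_nat_nat)  
      have a: "real_of_int \<lfloor>real m * \<epsilon>^2\<rfloor> \<le> real m * \<epsilon>^2" by (rule of_int_floor_le)
      show ?thesis unfolding g_def by (simp add: max_def) (use a in linarith)
    qed
    have "real m * (\<epsilon> * S) \<le> (\<Sum>i\<in>J. d i)"
      using sum_bounded_below[of J "\<epsilon> * S" d] J_def m_def by auto
    also have "\<dots> \<le> (\<Sum>i<n. d i)"
      by (rule sum_mono2) (use Jn dpos in auto)
    finally have "real k * (real m * (\<epsilon> * S)) \<le> real k * (\<Sum>i<n. d i)"
      by (simp add: mult_left_mono)
    then have "real k * (real m * (\<epsilon> * S)) \<le> S * Opt" using lowD by linarith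
    then have "S * (real k * real m * \<epsilon>) \<le> S * Opt" by (simp add: algebra_simps)
    then have kmO: "real k * real m * \<epsilon> \<le> Opt" using S_pos by simp
    have "real g * real k \<le> (1 + real m * \<epsilon>^2) * real k" using gle by (simp add: mult_right_mono)
    also have "\<dots> = real k + \<epsilon> * (real k * real m * \<epsilon>)" by (simp add: algebra_simps power2_eq_square)
    also have "\<dots> \<le> real k + \<epsilon> * Opt" using kmO eps by (simp add: mult_left_mono)
    finally have "real g * real k \<le> real k + \<epsilon> * Opt" .
    moreover have "0 \<le> \<epsilon> * Opt" using eps Opt0 by simp
    ultimately show ?thesis using c1 by (simp add: algebra_simps)
  qed
  define L where "L = length cs"
  define Aset where "Aset t = copies J k \<union> set (take t cs)" for t
  have setcs: "set cs = copies I k" using xs unfolding cs_def copies_def by (simp add: copy_order_set)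
  have dcs: "distinct cs" using xs unfolding cs_def by (simp add: copy_order_distinct)
  have AL: "Aset L = D" unfolding Aset_def L_def D_def using setcs IJ by (auto simp: copies_def)
  have AD: "Aset t \<subseteq> D" for t
    unfolding Aset_def D_def using set_take_subset[of t cs] setcs IJ by (auto simp: copies_def)
  have ASuc: "Aset (Suc t) = insert (cs ! t) (Aset t)" if "t < L" for t
    using that unfolding Aset_def L_def by (auto simp: take_Suc_conv_app_nth)
  define NF where "NF t = (\<not> (\<exists>b. b \<in> f ` Aset t \<and> load d f (Aset t) b + d (fst (cs ! t)) \<le> S \<and>
                         (\<forall>c'\<in>Aset t. f c' = b \<longrightarrow> fst c' \<noteq> fst (cs ! t))))" for t
  have stepF: "f (cs ! t) \<in> f ` Aset t" if "t < L" "\<not> NF t" for t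
  proof -
    have "(let A = copies J k \<union> set (take t cs); c = cs ! t; i = fst c;
            fits = (\<lambda>b. b \<in> f ` A \<and> load d f A b + d i \<le> S \<and>
                         (\<forall>c'\<in>A. f c' = b \<longrightarrow> fst c' \<noteq> i))
        in (if (\<exists>b. fits b) then fits (f c) else f c \<notin> f ` A))"
      using insert_step that(1) unfolding L_def by blast
    then show ?thesis using that(2) unfolding Let_def NF_def Aset_def by presburger
  qed
  have stable: "f ` Aset t = f ` Aset a"
    if "a \<le> t" "t \<le> L" "\<forall>t'. a \<le> t' \<and> t' < L \<longrightarrow> f (cs ! t') \<in> f ` Aset t'" for a t
    using that
  proof (induction t)
    case 0 then show ?case by simp
  next
    case (Suc t)
    show ?case
    proof (cases "a = Suc t")
      case True then show ?thesis by simp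
    next
      case False
      then have "a \<le> t" "t < L" using Suc.prems by auto
      then have "f ` Aset (Suc t) = f ` Aset t" using ASuc Suc.prems(3) by auto
      then show ?thesis using Suc.IH \<open>a \<le> t\<close> \<open>t < L\<close> Suc.prems(3) by simp
    qed
  qed
  have nbD: "num_bins f D = card (f ` Aset L)" unfolding num_bins_def AL ..
  show ?thesis
  proof (cases "\<exists>t<L. NF t")
    case False
    then have "f ` Aset L = f ` Aset 0" using stable[of 0 L] stepF by auto
    also have "\<dots> = fJ ` copies J k" unfolding Aset_def using f_J by simp
    finally have "num_bins f D = OPT S u J k" using nbD fJ_opt by (simp add: num_bins_def)
    then show ?thesis using partA unfolding D_def Opt_def by simp
  next
    case True
    define t0 where "t0 = Max {t. t < L \<and> NF t}"
    have fin: "finite {t. t < L \<and> NF t}" by simp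
    have t0: "t0 < L" "NF t0" using Max_in[OF fin] True unfolding t0_def by auto
    have after: "\<not> NF t" if "t0 < t" "t < L" for t
    proof
      assume "NF t"
      then have "t \<le> t0" using Max_ge[OF fin, of t] that unfolding t0_def by blast
      then show False using that by simp
    qed
    have "f ` Aset L = f ` Aset (Suc t0)"
      by (rule stable) (use t0 after stepF in auto)
    also have "\<dots> = insert (f (cs ! t0)) (f ` Aset t0)" using ASuc[OF t0(1)] by simp
    finally have Beq: "num_bins f D \<le> card (f ` Aset t0) + 1"
      using nbD by (simp add: card_insert_le_m1 card_insert_if)
    define A where "A = Aset t0"
    define c where "c = cs ! t0"
    define i where "i = fst c"
    have cI: "c \<in> copies I k" using t0(1) setcs unfolding c_def L_def by (metis nth_mem)
    then have iI: "i \<in> I" and ck: "c \<in> {i} \<times> {..<k}" unfolding i_def copies_def by auto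
    have finA: "finite A" using AD finD unfolding A_def by (meson finite_subset)
    have cnot: "c \<notin> set (take t0 cs)"
    proof -
      have "distinct (take (Suc t0) cs)" using dcs by simp
      then show ?thesis using t0(1) unfolding c_def L_def by (simp add: take_Suc_conv_app_nth)
    qed
    define Bi where "Bi = {b\<in>f`A. \<exists>c'\<in>A. f c' = b \<and> fst c' = i}"
    have "Bi \<subseteq> f ` ({i} \<times> {..<k} - {c})"
    proof
      fix b assume "b \<in> Bi"
      then obtain c' where c': "c' \<in> A" "f c' = b" "fst c' = i" unfolding Bi_def by auto
      have "c' \<notin> copies J k" using c'(3) iI IJd by (auto simp: copies_def)
      then have "c' \<in> set (take t0 cs)" using c'(1) unfolding A_def Aset_def by auto
      then have "c' \<in> copies I k" "c' \<noteq> c" using set_take_subset[of t0 cs] setcs cnot by auto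
      then have "c' \<in> {i} \<times> {..<k} - {c}" using c'(3) by (auto simp: copies_def)
      then show "b \<in> f ` ({i} \<times> {..<k} - {c})" using c'(2) by auto
    qed
    then have "card Bi \<le> card ({i} \<times> {..<k} - {c})" by (simp add: card_image_le surj_card_le)
    also have "\<dots> = k - 1" using ck by simp
    finally have cBi: "card Bi \<le> k - 1" .
    have BiA: "Bi \<subseteq> f ` A" unfolding Bi_def by auto
    have "card (f ` A) \<le> card (f ` A - Bi) + card Bi"
      by (metis card_Un_le Diff_partition BiA Un_commute)
    then have cardle: "real (num_bins f D) - real k \<le> real (card (f ` A - Bi))"
      using Beq cBi k unfolding A_def by linarith
    have loadnn: "0 \<le> load d f A b" for b
    proof -
      have "0 \<le> d (fst c)" if "c \<in> A" for c
        using AD[of t0] that dpos unfolding A_def D_def copies_def by fastforce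
      then show ?thesis unfolding load_def by (intro sum_nonneg) auto
    qed
    have heavy: "(1 - \<epsilon>) * S \<le> load d f A b" if "b \<in> f ` A - Bi" for b
    proof -
      have "\<not> (load d f A b + d i \<le> S)" using t0(2) that unfolding NF_def A_def Bi_def i_def c_def by auto
      moreover have "d i \<le> \<epsilon> * S" using iI I_def by simp
      ultimately show ?thesis by (simp add: algebra_simps)
    qed
    have "real (card (f ` A - Bi)) * ((1 - \<epsilon>) * S) \<le> (\<Sum>b\<in>f ` A - Bi. load d f A b)"
      using sum_bounded_below[of "f ` A - Bi" "(1 - \<epsilon>) * S" "load d f A"] heavy by auto
    also have "\<dots> \<le> (\<Sum>b\<in>f ` A. load d f A b)"
      by (rule sum_mono2) (use finA loadnn in auto)
    also have "\<dots> = (\<Sum>c\<in>A. d (fst c))" by (rule sum_loads[OF finA])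
    also have "\<dots> \<le> (\<Sum>c\<in>D. d (fst c))"
      by (rule sum_mono2) (use finD AD dpos in \<open>auto simp: A_def D_def copies_def\<close>)
    also have "\<dots> = real k * (\<Sum>i<n. d i)" unfolding D_def by (simp add: sum_copies)
    also have "\<dots> \<le> S * Opt" by (rule lowD)
    finally have "S * ((real (card (f ` A - Bi))) * (1 - \<epsilon>)) \<le> S * Opt" by (simp add: algebra_simps)
    then have "real (card (f ` A - Bi)) * (1 - \<epsilon>) \<le> Opt" using S_pos by simp
    moreover have "(real (num_bins f D) - real k) * (1 - \<epsilon>) \<le> real (card (f ` A - Bi)) * (1 - \<epsilon>)"
      by (rule mult_right_mono[OF cardle]) (use eps in simp)
    ultimately have key: "(real (num_bins f D) - real k) * (1 - \<epsilon>) \<le> Opt" by linarith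
    have "real (num_bins f D) - real k \<le> (1 + 2 * \<epsilon>) * Opt"
    proof (cases "real (num_bins f D) - real k \<le> 0")
      case True
      have "0 \<le> (1 + 2 * \<epsilon>) * Opt" using Opt0 eps by simp
      then show ?thesis using True by linarith
    next
      case False
      define x where "x = real (num_bins f D) - real k"
      have x0: "0 \<le> x" using False unfolding x_def by simp
      have "0 \<le> \<epsilon> * (1 - 2 * \<epsilon>)" using eps by simp
      moreover have "(1 + 2 * \<epsilon>) * (1 - \<epsilon>) = 1 + \<epsilon> * (1 - 2 * \<epsilon>)" by (simp add: algebra_simps)
      ultimately have e1: "1 \<le> (1 + 2 * \<epsilon>) * (1 - \<epsilon>)" by linarith
      have "x * 1 \<le> x * ((1 + 2 * \<epsilon>) * (1 - \<epsilon>))" by (rule mult_left_mono[OF e1 x0])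
      then have "real (num_bins f D) - real k \<le> (1 + 2 * \<epsilon>) * ((real (num_bins f D) - real k) * (1 - \<epsilon>))"
        unfolding x_def by (simp add: algebra_simps)
      also have "\<dots> \<le> (1 + 2 * \<epsilon>) * Opt" using key eps by (simp add: mult_left_mono)
      finally show ?thesis .
    qed
    then show ?thesis unfolding D_def Opt_def by simp
  qed
qed

end
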